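(* Let $\gamma>0$, $\mu\in\mathbb R\setminus\{0\}$, let $R^\gamma$ be a Bessel process of dimension $\gamma$ started at $0$, and let $T^\mu_t=\inf\{s:B_\mu(s)=t\}$, where $B_\mu(s)=B(s)+\mu s$ is a Brownian motion with drift $\mu$ independent of $R^\gamma$, whose first-passage density is $\Pr\{T^\mu_t\in ds\}/ds=\frac{t\,e^{-(t-\mu s)^2/(2s)}}{\sqrt{2\pi s^3}}$. Then for $r>0$, $t>0$, $$\Pr\{R^\gamma(T^\mu_t)\in dr\}/dr=\frac{4t\,e^{t\mu}r^{\gamma-1}}{2^{\gamma/2}\Gamma\left(\frac\gamma2\right)\sqrt{2\pi}}\left(\frac{\mu^2}{r^2+t^2}\right)^{\frac{\gamma+1}{4}}K_{\frac{\gamma+1}{2}}\left(|\mu|\sqrt{r^2+t^2}\right).$$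
   Context: $K_\nu$ denotes the modified Bessel function of the second kind of order $\nu$. A Bessel process of dimension $\gamma$ started at $0$ has density $\frac{2r^{\gamma-1}e^{-r^2/(2t)}}{(2t)^{\gamma/2}\Gamma(\gamma/2)}$, $r\ge0$, at time $t>0$. For $\mu<0$ the first-passage time may be infinite and the expression is a sub-probability density. *)

theory Defs
  imports "HOL-Analysis.Analysis"
begin

text \<open>Modified Bessel function of the second kind, via the standard integral
representation K_nu(x) = int_0^infty exp(-x cosh u) cosh(nu u) du, valid for x > 0.\<close>
definition besselK :: "real \<Rightarrow> real \<Rightarrow> real" where
  "besselK \<nu> x = (LBINT u:{0<..}. exp (- x * cosh u) * cosh (\<nu> * u))"

definition bessel_density :: "real \<Rightarrow> real \<Rightarrow> real \<Rightarrow> real" where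
  "bessel_density \<gamma> t r =
     2 * r powr (\<gamma> - 1) * exp (- r\<^sup>2 / (2 * t)) / ((2 * t) powr (\<gamma> / 2) * Gamma (\<gamma> / 2))"

text \<open>(Sub-)density of the first passage time of level t by B(s) + mu s.\<close>
definition fpt_density :: "real \<Rightarrow> real \<Rightarrow> real \<Rightarrow> real" where
  "fpt_density \<mu> t s = t * exp (- (t - \<mu> * s)\<^sup>2 / (2 * s)) / sqrt (2 * pi * s ^ 3)"

end

theory Submission
  imports Defs
begin

lemma cosh_lb: "(u::real) \<ge> 0 \<Longrightarrow> u^2/8 \<le> cosh u"
proof -
  assume u: "u \<ge> 0"
  have e: "1 + u/2 \<le> exp (u/2)" using exp_ge_add_one_self[of "u/2"] by simp
  have "(1 + u/2)^2 \<le> (exp (u/2))^2" using e u by (intro power_mono) auto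
  also have "\<dots> = exp u" by (simp add: power2_eq_square flip: exp_add)
  finally have ee: "(1 + u/2)^2 \<le> exp u" .
  have "u^2/4 \<le> (1 + u/2)^2" using u by (simp add: power2_eq_square field_simps)
  hence "u^2/4 \<le> exp u" using ee by linarith
  hence "u^2/4 \<le> exp u + exp (-u)" by (rule add_increasing2[rotated]) simp
  hence "u^2/8 \<le> (exp u + exp (-u))/2" by simp
  thus ?thesis unfolding cosh_def by simp
qed

lemma bnd:
  assumes x: "(x::real) > 0" and u: "u \<ge> 0"
  shows "exp (k*u - x*cosh u) \<le> exp (2*(\<bar>k\<bar>+1)^2/x) * exp (-u)"
proof -
  have c: "x*(u^2/8) \<le> x*cosh u" using cosh_lb[OF u] x by (simp add: mult_left_mono)
  have q: "(\<bar>k\<bar>+1)*u - x*u^2/8 \<le> 2*(\<bar>k\<bar>+1)^2/x"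
  proof -
    define a where "a = \<bar>k\<bar>+1"
    have "0 \<le> (4*a - x*u)^2" by simp
    hence "8*x*(a*u - x*u^2/8) \<le> 16*a^2"
      by (simp add: algebra_simps power2_eq_square)
    hence "a*u - x*u^2/8 \<le> 16*a^2/(8*x)" using x by (simp add: field_simps)
    thus ?thesis using x unfolding a_def by simp
  qed
  have "k*u \<le> \<bar>k\<bar>*u" using u by (simp add: abs_ge_self mult_right_mono)
  hence "k*u - x*cosh u \<le> 2*(\<bar>k\<bar>+1)^2/x + (-u)" using q c by (simp add: algebra_simps)
  thus ?thesis by (simp flip: exp_add)
qed

lemma half_int:
  assumes x: "(x::real) > 0"
  shows "(\<lambda>u. exp (k*u - x*cosh u)) absolutely_integrable_on {0<..}"
proof (rule measurable_bounded_by_integrable_imp_absolutely_integrable)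
  show "(\<lambda>u. exp (k*u - x*cosh u)) \<in> borel_measurable (lebesgue_on {0<..})"
    by (intro continuous_imp_measurable_on_sets_lebesgue continuous_intros) auto
  show "{0::real<..} \<in> sets lebesgue" by simp
  have "((\<lambda>u::real. exp (-1*u)) has_integral exp (-1*0)/1) {0..}"
    by (rule has_integral_exp_minus_to_infinity) simp
  hence "(\<lambda>u::real. exp (-u)) integrable_on {0..}" by (auto simp: integrable_on_def)
  hence "(\<lambda>u::real. exp (-u)) integrable_on {0<..}"
    by (rule integrable_spike_set) (auto intro: negligible_subset[of "{0}"])
  thus "(\<lambda>u. exp (2*(\<bar>k\<bar>+1)^2/x) * exp (-u)) integrable_on {0<..}"
    using integrable_on_cmult_left[of _ "{0<..}" "exp (2*(\<bar>k\<bar>+1)^2/x)"] by simp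
  fix u :: real assume "u \<in> {0<..}"
  thus "norm (exp (k*u - x*cosh u)) \<le> exp (2*(\<bar>k\<bar>+1)^2/x) * exp (-u)"
    using bnd[OF x, of u k] by simp
qed

lemma K_int:
  assumes x: "(x::real) > 0"
  shows "((\<lambda>u. exp (k*u - x*cosh u) + exp (-k*u - x*cosh u)) has_integral 2*besselK k x) {0<..}"
proof -
  let ?f = "\<lambda>u. exp (k*u - x*cosh u) + exp (-k*u - x*cosh u)"
  let ?h = "\<lambda>u. exp (- x * cosh u) * cosh (k * u)"
  have fi: "?f integrable_on {0<..}"
    using set_lebesgue_integral_eq_integral(1)[OF half_int[OF x, of k]]
      set_lebesgue_integral_eq_integral(1)[OF half_int[OF x, of "-k"]] by (rule integrable_add)
  have heq: "?h u = (1/2) * ?f u" for u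
    by (simp add: cosh_def field_simps flip: exp_add) 
  have hi0: "(\<lambda>u. (1/2) * ?f u) integrable_on {0<..}"
    using integrable_on_cmult_left[OF fi, of "1/2"] by simp
  have hi: "?h integrable_on {0<..}"
    unfolding heq by (rule hi0)
  have hnn: "0 \<le> ?h u" for u by (intro mult_nonneg_nonneg) (auto simp: cosh_def add_nonneg_nonneg)
  have ha: "?h absolutely_integrable_on {0<..}"
    using absolutely_integrable_on_iff_nonneg[of "{0<..}" ?h] hnn hi by simp
  have hm: "?h \<in> borel_measurable borel"
    by (intro borel_measurable_continuous_onI continuous_intros)
  have "set_integrable lborel {0<..} ?h"
    using ha unfolding set_integrable_def
    by (subst (asm) integrable_completion) (use hm in measurable)
  hence "besselK k x = integral {0<..} ?h"
    unfolding besselK_def by (rule set_borel_integral_eq_integral(2))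
  also have "\<dots> = (1/2) * integral {0<..} ?f"
    unfolding heq using integral_cmul[of "{0<..}" "1/2" ?f] by simp
  finally have "integral {0<..} ?f = 2 * besselK k x" by simp
  thus ?thesis using fi by (metis integrable_integral)
qed

lemma full_int:
  assumes x: "(x::real) > 0"
  shows "((\<lambda>u. exp (k*u - x*cosh u)) has_integral 2*besselK k x) UNIV"
proof -
  let ?f1 = "\<lambda>u. exp (k*u - x*cosh u)"
  let ?f2 = "\<lambda>u. exp (-k*u - x*cosh u)"
  have a1: "?f1 absolutely_integrable_on {0<..}" by (rule half_int[OF x])
  have a2: "?f2 absolutely_integrable_on {0<..}" using half_int[OF x, of "-k"] by simp
  have i1: "?f1 integrable_on {0<..}" by (rule set_lebesgue_integral_eq_integral(1)[OF a1])
  have i2: "?f2 integrable_on {0<..}" by (rule set_lebesgue_integral_eq_integral(1)[OF a2])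
  have sum: "integral {0<..} ?f2 + integral {0<..} ?f1 = 2*besselK k x"
  proof -
    have "((\<lambda>u. ?f1 u + ?f2 u) has_integral (integral {0<..} ?f1 + integral {0<..} ?f2)) {0<..}"
      using i1 i2 by (intro has_integral_add) (auto intro: integrable_integral)
    with K_int[OF x, of k] show ?thesis using has_integral_unique by (simp add: add.commute)
  qed
  have img: "uminus ` {..<0::real} = {0<..}"
    by (auto simp: image_iff intro!: bexI[of _ "- _"])
  have cv: "(\<lambda>u. \<bar>-1\<bar> * ?f2 (- u)) absolutely_integrable_on {..<0} \<and>
        integral {..<0} (\<lambda>u. \<bar>-1\<bar> * ?f2 (- u)) = integral {0<..} ?f2"
  proof (subst has_absolute_integral_change_of_variables_1'[where g = uminus])
    show "{..<0::real} \<in> sets lebesgue" by simp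
    show "((\<lambda>u. - u) has_field_derivative -1) (at u within {..<0})" for u :: real
      by (auto intro!: derivative_eq_intros)
    show "inj_on uminus {..<0::real}" by (simp add: inj_on_def)
    show "?f2 absolutely_integrable_on uminus ` {..<0} \<and>
      integral (uminus ` {..<0}) ?f2 = integral {0<..} ?f2" unfolding img using a2 by simp
  qed
  have eqf: "(\<lambda>u. \<bar>-1\<bar> * ?f2 (- u)) = ?f1" by (rule ext) simp
  have hneg: "(?f1 has_integral integral {0<..} ?f2) {..<0}"
    using cv unfolding eqf using set_lebesgue_integral_eq_integral(1) integrable_integral by metis
  have hpos: "(?f1 has_integral integral {0<..} ?f1) {0<..}" using i1 by (rule integrable_integral)
  have "(?f1 has_integral (integral {0<..} ?f2 + integral {0<..} ?f1)) ({..<0} \<union> {0<..})"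
  proof (rule has_integral_Un[OF hneg hpos])
    have "{..<0::real} \<inter> {0<..} = {}" by auto
    thus "negligible ({..<0::real} \<inter> {0<..})" by simp
  qed
  hence h: "(?f1 has_integral 2*besselK k x) ({..<0} \<union> {0<..})" using sum by simp
  show ?thesis
  proof (subst has_integral_spike_set_eq)
    show "negligible {u \<in> UNIV - ({..<0} \<union> {0<..}). ?f1 u \<noteq> 0}"
      by (rule negligible_subset[of "{0}"]) auto
    show "negligible {u \<in> ({..<0} \<union> {0<..}) - UNIV. ?f1 u \<noteq> 0}" by simp
  qed (rule h)
qed

lemma subst_int:
  assumes c: "(c::real) > 0" and q: "q > 0"
  shows "((\<lambda>s. s powr p * exp (-(q*c)/s - (q/c) * s)) has_integral
           (c powr (p+1) * (2*besselK (p+1) (2*q)))) {0<..}"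
proof -
  let ?f = "\<lambda>s. s powr p * exp (-(q*c)/s - (q/c) * s)"
  let ?G = "\<lambda>u. c powr (p+1) * exp ((p+1)*u - (2*q)*cosh u)"
  have pt: "\<bar>c * exp u\<bar> * ?f (c * exp u) = ?G u" for u
  proof -
    have e1: "(c*exp u) powr p = c powr p * exp (u*p)" using c by (simp add: powr_mult exp_powr_real)
    have e2: "c * c powr p = c powr (p+1)" using c by (simp add: powr_add)
    have e3: "(q*c)/(c*exp u) = q*exp(-u)" using c by (simp add: exp_minus field_simps)
    have e4: "(q/c) * (c*exp u) = q*exp u" using c by simp
    have e5: "(2*q)*cosh u = q*exp u + q*exp(-u)" by (simp add: cosh_def field_simps)
    have "\<bar>c * exp u\<bar> * ?f (c * exp u) = (c * c powr p) * (exp u * exp (u*p)) * exp (-(q*c)/(c*exp u) - (q/c) * (c*exp u))"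
      using c by (simp add: e1 mult_ac)
    also have "\<dots> = c powr (p+1) * exp ((p+1)*u - (2*q)*cosh u)"
      unfolding e2 e3 e4 e5 using c by (simp add: algebra_simps exp_minus divide_inverse flip: exp_add exp_diff)
    finally show ?thesis .
  qed
  have hG: "(?G has_integral (c powr (p+1) * (2*besselK (p+1) (2*q)))) UNIV"
    using has_integral_mult_right[OF full_int[of "2*q" "p+1"]] q by simp
  have Gnn: "0 \<le> ?G u" for u by simp
  have aG: "?G absolutely_integrable_on UNIV"
    using absolutely_integrable_on_iff_nonneg[of UNIV ?G] Gnn hG by (auto simp: integrable_on_def)
  have img: "(\<lambda>u. c * exp u) ` UNIV = {0<..}"
  proof
    show "(\<lambda>u. c * exp u) ` UNIV \<subseteq> {0<..}" using c by auto
    show "{0<..} \<subseteq> (\<lambda>u. c * exp u) ` UNIV"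
    proof
      fix s :: real assume "s \<in> {0<..}"
      hence "s = c * exp (ln (s/c))" using c by simp
      thus "s \<in> (\<lambda>u. c * exp u) ` UNIV" by blast
    qed
  qed
  have "?f absolutely_integrable_on (\<lambda>u. c * exp u) ` UNIV \<and>
        integral ((\<lambda>u. c * exp u) ` UNIV) ?f = c powr (p+1) * (2*besselK (p+1) (2*q))"
  proof (subst has_absolute_integral_change_of_variables_1'[symmetric, where g' = "\<lambda>u. c * exp u"])
    show "UNIV \<in> sets lebesgue" by simp
    show "((\<lambda>u. c * exp u) has_field_derivative c * exp u) (at u within UNIV)" for u
      by (auto intro!: derivative_eq_intros)
    show "inj_on (\<lambda>u. c * exp u) UNIV" using c by (simp add: inj_on_def)
    show "(\<lambda>u. \<bar>c * exp u\<bar> * ?f (c * exp u)) absolutely_integrable_on UNIV \<and>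
      integral UNIV (\<lambda>u. \<bar>c * exp u\<bar> * ?f (c * exp u)) = c powr (p+1) * (2*besselK (p+1) (2*q))"
      unfolding pt using aG integral_unique[OF hG] by blast
  qed
  thus ?thesis unfolding img
    using set_lebesgue_integral_eq_integral(1) integrable_integral by metis
qed

lemma alg_id:
  fixes rp e1 e2 X Y pg sg G sq s32 t :: real
  assumes "sg > 0" "s32 > 0" "G \<noteq> 0" "pg > 0" "sq > 0" and e: "e1*e2 = X*Y"
  shows "2*rp*e1/(pg* sg*G) * (t*e2/(sq* s32)) = 2*t*X*rp/(pg*G* sq) * ((1/(sg* s32)) * Y)"
proof -
  have "2*rp*e1/(pg* sg*G) * (t*e2/(sq* s32)) = 2*rp*t*(e1*e2)/(pg* sg*G* sq* s32)"
    using assms by (simp add: field_simps)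
  also have "\<dots> = 2*rp*t*(X*Y)/(pg* sg*G* sq* s32)" by (simp add: e)
  also have "\<dots> = 2*t*X*rp/(pg*G* sq) * ((1/(sg* s32)) * Y)"
    using assms by (simp add: field_simps)
  finally show ?thesis .
qed

lemma besselK_minus: "besselK (-v) x = besselK v x"
  unfolding besselK_def by simp

theorem mainTheorem10:
  fixes \<gamma> \<mu> t r :: real
  assumes "\<gamma> > 0" and "\<mu> \<noteq> 0" and "r > 0" and "t > 0"
  shows "((\<lambda>s. bessel_density \<gamma> s r * fpt_density \<mu> t s) has_integral
     (4 * t * exp (t * \<mu>) * r powr (\<gamma> - 1)
       / (2 powr (\<gamma> / 2) * Gamma (\<gamma> / 2) * sqrt (2 * pi))
       * (\<mu>\<^sup>2 / (r\<^sup>2 + t\<^sup>2)) powr ((\<gamma> + 1) / 4)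
       * besselK ((\<gamma> + 1) / 2) (\<bar>\<mu>\<bar> * sqrt (r\<^sup>2 + t\<^sup>2)))) {0<..}"
proof -
  note g = assms(1) and mu = assms(2) and rpos = assms(3) and tpos = assms(4)
  define A where "A = r\<^sup>2 + t\<^sup>2"
  have A: "A > 0" unfolding A_def using rpos by (simp add: add_pos_nonneg)
  define c where "c = sqrt A / \<bar>\<mu>\<bar>"
  define q where "q = \<bar>\<mu>\<bar> * sqrt A / 2"
  define p where "p = -(\<gamma>+3)/2"
  define E where "E = 2*t*exp(t*\<mu>)*r powr (\<gamma>-1) / (2 powr (\<gamma>/2) * Gamma (\<gamma>/2) * sqrt (2*pi))"
  have c: "c > 0" unfolding c_def using A mu by simp
  have q: "q > 0" unfolding q_def using A mu by simp
  have sA: "sqrt A * sqrt A = A" using A by simp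
  have qc: "q*c = A/2" unfolding q_def c_def using mu sA by (simp add: field_simps)
  have qdc: "q/c = \<mu>\<^sup>2/2" unfolding q_def c_def using mu A sA
    by (simp add: field_simps power2_eq_square)
  have G0: "Gamma (\<gamma>/2) > 0" using g by (intro Gamma_real_pos) simp
  hence G: "Gamma (\<gamma>/2) \<noteq> 0" by simp
  have pt: "bessel_density \<gamma> s r * fpt_density \<mu> t s = E * (s powr p * exp (-(q*c)/s - (q/c) * s))"
    if s: "s \<in> {0<..}" for s
  proof -
    from s have s: "s > 0" by simp
    have p1: "(2* s) powr (\<gamma>/2) = 2 powr (\<gamma>/2) * s powr (\<gamma>/2)" using s by (simp add: powr_mult)
    have p2: "sqrt (2*pi* s^3) = sqrt (2*pi) * s powr (3/2)"
    proof -
      have "s powr (3/2) = sqrt (s powr 3)" using s by (simp add: powr_half_sqrt_powr)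
      also have "s powr 3 = s^3" using s by (simp add: powr_realpow)
      finally show ?thesis by (simp add: real_sqrt_mult)
    qed
    have p3: "s powr p = 1/(s powr (\<gamma>/2) * s powr (3/2))"
    proof -
      have "s powr p * (s powr (\<gamma>/2) * s powr (3/2)) = s powr (p + \<gamma>/2 + 3/2)"
        by (simp add: powr_add mult_ac)
      also have "p + \<gamma>/2 + 3/2 = 0" unfolding p_def by (simp add: field_simps)
      finally show ?thesis using s by (simp add: field_simps)
    qed
    have ex: "exp (- r\<^sup>2 / (2 * s)) * exp (- (t - \<mu> * s)\<^sup>2 / (2 * s)) = exp (t*\<mu>) * exp (-(q*c)/s - (q/c) * s)"
    proof -
      have "- r\<^sup>2 / (2 * s) + - (t - \<mu> * s)\<^sup>2 / (2 * s) = t*\<mu> + (-(q*c)/s - (q/c) * s)"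
        unfolding qc qdc A_def using s by (simp add: field_simps power2_eq_square)
      thus ?thesis by (simp flip: exp_add)
    qed
    show ?thesis
      unfolding bessel_density_def fpt_density_def p1 p2 p3 E_def
      by (rule alg_id) (use s G ex in auto)
  qed
  have hI: "((\<lambda>s. E * (s powr p * exp (-(q*c)/s - (q/c) * s))) has_integral
           E * (c powr (p+1) * (2*besselK (p+1) (2*q)))) {0<..}"
    by (rule has_integral_mult_right[OF subst_int[OF c q]])
  have h2: "((\<lambda>s. bessel_density \<gamma> s r * fpt_density \<mu> t s) has_integral
           E * (c powr (p+1) * (2*besselK (p+1) (2*q)))) {0<..}"
    by (rule has_integral_eq[OF _ hI]) (simp add: pt)
  have k1: "besselK (p+1) (2*q) = besselK ((\<gamma> + 1) / 2) (\<bar>\<mu>\<bar> * sqrt (r\<^sup>2 + t\<^sup>2))"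
  proof -
    have "p+1 = - ((\<gamma> + 1) / 2)" unfolding p_def by (simp add: field_simps)
    moreover have "2*q = \<bar>\<mu>\<bar> * sqrt (r\<^sup>2 + t\<^sup>2)" unfolding q_def A_def by simp
    ultimately show ?thesis by (simp add: besselK_minus)
  qed
  have k2: "c powr (p+1) = (\<mu>\<^sup>2 / (r\<^sup>2 + t\<^sup>2)) powr ((\<gamma> + 1) / 4)"
  proof -
    have "c^2 = A/\<mu>\<^sup>2" unfolding c_def using A by (simp add: power_divide)
    have cp: "c powr (-2) = inverse (c powr 2)" by (rule powr_minus)
    have cp2: "c powr 2 = c^2" using c powr_realpow[of c 2] by simp
    have "\<mu>\<^sup>2 / A = c powr (-2)" unfolding cp cp2 \<open>c^2 = A/\<mu>\<^sup>2\<close> by simp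
    hence "(\<mu>\<^sup>2 / A) powr ((\<gamma> + 1) / 4) = c powr (-2 * ((\<gamma> + 1) / 4))" by (simp add: powr_powr)
    also have "-2 * ((\<gamma> + 1) / 4) = p + 1" unfolding p_def by (simp add: field_simps)
    finally show ?thesis unfolding A_def by simp
  qed
  have "E * (c powr (p+1) * (2*besselK (p+1) (2*q))) =
     (4 * t * exp (t * \<mu>) * r powr (\<gamma> - 1)
       / (2 powr (\<gamma> / 2) * Gamma (\<gamma> / 2) * sqrt (2 * pi))
       * (\<mu>\<^sup>2 / (r\<^sup>2 + t\<^sup>2)) powr ((\<gamma> + 1) / 4)
       * besselK ((\<gamma> + 1) / 2) (\<bar>\<mu>\<bar> * sqrt (r\<^sup>2 + t\<^sup>2)))"
  proof -
    have "4 * t * exp (t * \<mu>) * r powr (\<gamma> - 1)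
       / (2 powr (\<gamma> / 2) * Gamma (\<gamma> / 2) * sqrt (2 * pi)) = 2 * E" unfolding E_def by simp
    thus ?thesis unfolding k1 k2 by (simp only: mult_ac)
  qed
  with h2 show ?thesis by simp
qed

end
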